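(* Let $(\rho_0,p_0)$ be a solution of the TOV system on $[0,R)$ with regular centre, with mass function $m_0$, and let $$g_0(r)=\frac{m_0(r)+4\pi p_0(r)\,r^3}{r^2\,[1-2m_0(r)/r]},\qquad I_0(r)=\int_0^r g_0(s)\,ds .$$ For a real parameter $\delta p_c$ set $$D(r)=1+4\pi\,\delta p_c\int_0^r \frac{s\,e^{-2I_0(s)}}{\sqrt{1-2m_0(s)/s}}\,ds,\qquad \delta p(r)=\frac{\delta p_c\,\sqrt{1-2m_0(r)/r}\;e^{-2I_0(r)}}{D(r)} .$$ Then on every interval $[0,R')\subseteq[0,R)$ on which $D>0$, the pair $(\rho_0,\,p_0+\delta p)$ (same density, hence same mass function $m_0$) solves the TOV system with regular centre, and its central pressure is $p_0(0)+\delta p_c$. Conversely, every solution $(\rho_0,p)$ of the TOV system on $[0,R)$ with the same density $\rho_0$ and regular centre is of this form with $\delta p_c=p(0)-p_0(0)$.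
   Context: Units $G=c=1$. Given a continuous function $\rho$ on $[0,R)$ ($0<R\le\infty$), its mass function is $m(r)=4\pi\int_0^r\rho(s)s^2\,ds$. A pair $(\rho,p)$ with $\rho$ continuous and $p$ of class $C^1$ on $(0,R)$ "solves the TOV system on $[0,R)$" if $1-2m(r)/r>0$ for $0<r<R$ and $$\frac{dp}{dr}=-\frac{[\rho(r)+p(r)]\,[m(r)+4\pi p(r)r^3]}{r^2\,[1-2m(r)/r]}\quad (0<r<R).$$ It has "regular centre" if $\rho$ and $p$ extend continuously to $r=0$ with finite values $\rho(0)=\rho_c$ (central density) and $p(0)=p_c$ (central pressure). *)

theory Defs
  imports "HOL-Analysis.Analysis" "HOL-Library.Extended_Real"
begin

text \<open>Units G = c = 1. The radius bound R may be infinite, hence R :: ereal.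
  The open interval (0,R) and half-open interval [0,R).\<close>

definition openI :: "ereal \<Rightarrow> real set" where
  "openI R = {r. 0 < r \<and> ereal r < R}"

definition halfI :: "ereal \<Rightarrow> real set" where
  "halfI R = {r. 0 \<le> r \<and> ereal r < R}"

definition mass :: "(real \<Rightarrow> real) \<Rightarrow> real \<Rightarrow> real" where
  "mass \<rho> r = 4 * pi * integral {0..r} (\<lambda>s. \<rho> s * s\<^sup>2)"

definition TOV_rhs :: "(real \<Rightarrow> real) \<Rightarrow> (real \<Rightarrow> real) \<Rightarrow> real \<Rightarrow> real" where
  "TOV_rhs \<rho> p r =
     - ((\<rho> r + p r) * (mass \<rho> r + 4 * pi * p r * r ^ 3)) / (r\<^sup>2 * (1 - 2 * mass \<rho> r / r))"

definition C1_on :: "real set \<Rightarrow> (real \<Rightarrow> real) \<Rightarrow> bool" where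
  "C1_on S p \<longleftrightarrow> (\<exists>p'. continuous_on S p' \<and> (\<forall>x\<in>S. (p has_real_derivative p' x) (at x)))"

definition solves_TOV :: "(real \<Rightarrow> real) \<Rightarrow> (real \<Rightarrow> real) \<Rightarrow> ereal \<Rightarrow> bool" where
  "solves_TOV \<rho> p R \<longleftrightarrow>
     continuous_on (openI R) \<rho> \<and> C1_on (openI R) p \<and>
     (\<forall>r\<in>openI R. 1 - 2 * mass \<rho> r / r > 0) \<and>
     (\<forall>r\<in>openI R. (p has_real_derivative TOV_rhs \<rho> p r) (at r))"

text \<open>Regular centre: rho and p extend continuously to r = 0 with finite values
  rho 0 and p 0 (the values of the functions at 0 are the central values).\<close>
definition regular_centre :: "(real \<Rightarrow> real) \<Rightarrow> (real \<Rightarrow> real) \<Rightarrow> bool" where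
  "regular_centre \<rho> p \<longleftrightarrow> (\<rho> \<longlongrightarrow> \<rho> 0) (at_right 0) \<and> (p \<longlongrightarrow> p 0) (at_right 0)"

definition g0 :: "(real \<Rightarrow> real) \<Rightarrow> (real \<Rightarrow> real) \<Rightarrow> real \<Rightarrow> real" where
  "g0 \<rho> p r = (mass \<rho> r + 4 * pi * p r * r ^ 3) / (r\<^sup>2 * (1 - 2 * mass \<rho> r / r))"

definition I0 :: "(real \<Rightarrow> real) \<Rightarrow> (real \<Rightarrow> real) \<Rightarrow> real \<Rightarrow> real" where
  "I0 \<rho> p r = integral {0..r} (g0 \<rho> p)"

definition Dfun :: "(real \<Rightarrow> real) \<Rightarrow> (real \<Rightarrow> real) \<Rightarrow> real \<Rightarrow> real \<Rightarrow> real" where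
  "Dfun \<rho> p dpc r = 1 + 4 * pi * dpc *
     integral {0..r} (\<lambda>s. s * exp (- 2 * I0 \<rho> p s) / sqrt (1 - 2 * mass \<rho> s / s))"

definition delta_p :: "(real \<Rightarrow> real) \<Rightarrow> (real \<Rightarrow> real) \<Rightarrow> real \<Rightarrow> real \<Rightarrow> real" where
  "delta_p \<rho> p dpc r =
     dpc * sqrt (1 - 2 * mass \<rho> r / r) * exp (- 2 * I0 \<rho> p r) / Dfun \<rho> p dpc r"

end

theory Submission imports Defs begin

lemma ex_above:
  assumes "ereal x < R" shows "\<exists>c. x < c \<and> ereal c < R"
proof -
  obtain z where "ereal x < ereal z" "ereal z < R" using ereal_dense2[OF assms] by blast
  then show ?thesis by auto
qed

lemma ereal_lt_trans: "r \<le> b \<Longrightarrow> ereal b < R \<Longrightarrow> ereal r < R"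
  by (meson ereal_less_eq(3) order.strict_trans1)

lemma isCont_openI:
  assumes "continuous_on (openI R) f" "x \<in> openI R"
  shows "isCont f x"
proof -
  obtain c where c: "x < c" "ereal c < R" using assms(2) ex_above unfolding openI_def by blast
  have sub: "{0<..<c} \<subseteq> openI R" using c unfolding openI_def
    by (auto intro: order.strict_trans[of _ "ereal c"])
  have "continuous_on {0<..<c} f" using continuous_on_subset[OF assms(1) sub] .
  moreover have "x \<in> {0<..<c}" using assms(2) c unfolding openI_def by auto
  ultimately show ?thesis using continuous_on_eq_continuous_at[of "{0<..<c}" f] by auto
qed

lemma glue:
  fixes f :: "real \<Rightarrow> real"
  assumes "0 < b" "\<And>x. 0 < x \<Longrightarrow> x \<le> b \<Longrightarrow> isCont f x" "(f \<longlongrightarrow> f 0) (at_right 0)"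
  shows "continuous_on {0..b} f"
proof (rule continuous_on_IccI)
  show "(f \<longlongrightarrow> f b) (at_left b)"
    using assms(2)[of b] assms(1) by (simp add: isCont_def filterlim_at_split)
  show "\<And>x. 0 < x \<Longrightarrow> x < b \<Longrightarrow> f \<midarrow>x\<rightarrow> f x" using assms(2) by (simp add: isCont_def)
qed (use assms in auto)

lemma Icc_sub_halfI:
  assumes "ereal b < R" "x \<in> {0..b}" shows "x \<in> halfI R"
  using assms unfolding halfI_def by (auto intro: order.strict_trans1[of _ "ereal b"])

lemma Ioc_sub_openI:
  assumes "ereal b < R" "0 < x" "x \<le> b" shows "x \<in> openI R"
  using assms unfolding openI_def by (auto intro: order.strict_trans1[of _ "ereal b"])

lemma ftc_at:
  fixes f :: "real \<Rightarrow> real"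
  assumes "continuous_on {0..c} f" "0 < x" "x < c"
  shows "((\<lambda>u. integral {0..u} f) has_real_derivative f x) (at x)"
  using integral_has_real_derivative[OF assms(1), of x] assms(2,3)
  by (simp add: at_within_Icc_at)

lemma cont_rho:
  assumes "solves_TOV \<rho> p R" "regular_centre \<rho> p" "0 < b" "ereal b < R"
  shows "continuous_on {0..b} \<rho>" "continuous_on {0..b} p"
proof -
  have co: "continuous_on (openI R) \<rho>" "C1_on (openI R) p"
    "\<forall>r\<in>openI R. (p has_real_derivative TOV_rhs \<rho> p r) (at r)"
    using assms(1) unfolding solves_TOV_def by auto
  show "continuous_on {0..b} \<rho>"
    by (rule glue[OF assms(3)]) (use isCont_openI[OF co(1)] Ioc_sub_openI[OF assms(4)] assms(2)
       in \<open>auto simp: regular_centre_def\<close>)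
  show "continuous_on {0..b} p"
  proof (rule glue[OF assms(3)])
    fix x :: real assume "0 < x" "x \<le> b"
    then show "isCont p x" using co(3) Ioc_sub_openI[OF assms(4)] DERIV_isCont by blast
  qed (use assms(2) in \<open>auto simp: regular_centre_def\<close>)
qed


definition hh :: "(real \<Rightarrow> real) \<Rightarrow> real \<Rightarrow> real" where
  "hh \<rho> r = 1 - 2 * mass \<rho> r / r"

definition ph :: "(real \<Rightarrow> real) \<Rightarrow> real \<Rightarrow> real" where
  "ph \<rho> r = mass \<rho> r / r^2"

definition Dint :: "(real \<Rightarrow> real) \<Rightarrow> (real \<Rightarrow> real) \<Rightarrow> real \<Rightarrow> real" where
  "Dint \<rho> p s = s * exp (- 2 * I0 \<rho> p s) / sqrt (1 - 2 * mass \<rho> s / s)"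

lemma Dfun_alt: "Dfun \<rho> p dpc r = 1 + 4 * pi * dpc * integral {0..r} (Dint \<rho> p)"
  unfolding Dfun_def Dint_def by simp

lemma mass0: "mass \<rho> 0 = 0" unfolding mass_def by simp
lemma I00: "I0 \<rho> p 0 = 0" unfolding I0_def by simp
lemma Dfun0: "Dfun \<rho> p dpc 0 = 1" unfolding Dfun_def by simp

lemma hh_alt: "hh \<rho> r = 1 - 2 * r * ph \<rho> r"
  unfolding hh_def ph_def by (cases "r = 0") (auto simp: field_simps power2_eq_square)

lemma Dint_alt: "Dint \<rho> p s = s * exp (- 2 * I0 \<rho> p s) / sqrt (hh \<rho> s)"
  unfolding Dint_def hh_def ..

lemma g0_alt: "g0 \<rho> p r = (ph \<rho> r + 4 * pi * p r * r) / hh \<rho> r"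
  unfolding g0_def hh_def ph_def
  by (cases "r = 0") (auto simp: field_simps power2_eq_square power3_eq_cube)

locale tov =
  fixes \<rho> p :: "real \<Rightarrow> real" and R :: ereal
  assumes sol: "solves_TOV \<rho> p R" and reg: "regular_centre \<rho> p" and Rpos: "0 < R"
begin

lemma hpos_open: "x \<in> openI R \<Longrightarrow> 1 - 2 * mass \<rho> x / x > 0"
  using sol unfolding solves_TOV_def by auto

lemma pder: "x \<in> openI R \<Longrightarrow> (p has_real_derivative TOV_rhs \<rho> p x) (at x)"
  using sol unfolding solves_TOV_def by auto

lemma crho: "0 < b \<Longrightarrow> ereal b < R \<Longrightarrow> continuous_on {0..b} \<rho>"
  using cont_rho[OF sol reg] by auto
lemma cp: "0 < b \<Longrightarrow> ereal b < R \<Longrightarrow> continuous_on {0..b} p"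
  using cont_rho[OF sol reg] by auto

lemma cmass: assumes "0 < b" "ereal b < R" shows "continuous_on {0..b} (mass \<rho>)"
proof -
  have "continuous_on {0..b} (\<lambda>s. \<rho> s * s\<^sup>2)"
    by (intro continuous_intros crho assms)
  then have "continuous_on {0..b} (\<lambda>r. integral {0..r} (\<lambda>s. \<rho> s * s\<^sup>2))"
    by (intro indefinite_integral_continuous_1 integrable_continuous_interval)
  then show ?thesis unfolding mass_def[abs_def] by (intro continuous_intros)
qed

lemma dmass: assumes "x \<in> openI R"
  shows "(mass \<rho> has_real_derivative 4 * pi * (\<rho> x * x\<^sup>2)) (at x)"
proof -
  obtain c where c: "x < c" "ereal c < R" using assms ex_above unfolding openI_def by blast
  have x0: "0 < x" using assms unfolding openI_def by auto
  have "continuous_on {0..c} (\<lambda>s. \<rho> s * s\<^sup>2)"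
    using c x0 by (intro continuous_intros crho) auto
  from ftc_at[OF this x0 c(1)] show ?thesis
    unfolding mass_def[abs_def] by (rule DERIV_cmult)
qed

lemma hpos: "x \<in> halfI R \<Longrightarrow> 1 - 2 * mass \<rho> x / x > 0"
  using hpos_open unfolding halfI_def openI_def by (cases "x = 0") auto

lemma phi_lim: "((\<lambda>r. mass \<rho> r / r^2) \<longlongrightarrow> 0) (at_right 0)"
proof -
  obtain b where b: "0 < b" "ereal b < R" using ereal_dense2[OF Rpos] by (auto simp: zero_ereal_def)
  have "bounded (\<rho> ` {0..b})"
    by (intro compact_imp_bounded compact_continuous_image crho b compact_Icc)
  then obtain M where M: "\<And>s. s \<in> {0..b} \<Longrightarrow> \<bar>\<rho> s\<bar> \<le> M" unfolding bounded_iff by fastforce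
  have ev: "\<forall>\<^sub>F r in at_right 0. norm (mass \<rho> r / r^2) \<le> 4 * pi * M * r"
    unfolding eventually_at_right_field
  proof (intro exI[of _ b] conjI allI impI)
    fix r :: real assume r: "0 < r" "r < b"
    have "norm (integral {0..r} (\<lambda>s. \<rho> s * s\<^sup>2)) \<le> (M * r^2) * (r - 0)"
    proof (rule integral_bound)
      show "continuous_on {0..r} (\<lambda>s. \<rho> s * s\<^sup>2)"
        using r b ereal_lt_trans[of r b R] by (intro continuous_intros crho) auto
      fix t assume t: "t \<in> {0..r}"
      have "\<bar>\<rho> t\<bar> \<le> M" using M t r by auto
      moreover have "t^2 \<le> r^2" using t by (auto intro: power_mono)
      ultimately show "norm (\<rho> t * t\<^sup>2) \<le> M * r\<^sup>2"
        by (simp add: abs_mult) (meson abs_ge_zero mult_mono order_trans zero_le_power2)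
    qed (use r in auto)
    then show "norm (mass \<rho> r / r^2) \<le> 4 * pi * M * r"
      using r unfolding mass_def by (simp add: abs_mult field_simps power2_eq_square power3_eq_cube)
  qed (use b in auto)
  show ?thesis
    by (rule Lim_null_comparison[OF ev]) (auto intro!: tendsto_eq_intros)
qed

end
context tov begin

lemma cphi: assumes "0 < b" "ereal b < R" shows "continuous_on {0..b} (ph \<rho>)"
proof (rule glue[OF assms(1)])
  fix x :: real assume x: "0 < x" "x \<le> b"
  then have "x \<in> openI R" using Ioc_sub_openI[OF assms(2)] by auto
  then have "isCont (mass \<rho>) x" using dmass DERIV_isCont by blast
  then show "isCont (ph \<rho>) x" unfolding ph_def[abs_def] using x by (intro continuous_intros) auto
qed (use phi_lim in \<open>simp add: ph_def[abs_def]\<close>)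

lemma ch: assumes "0 < b" "ereal b < R" shows "continuous_on {0..b} (hh \<rho>)"
  unfolding hh_alt[abs_def] by (intro continuous_intros cphi assms)

lemma hposI: "0 \<le> x \<Longrightarrow> x \<le> b \<Longrightarrow> ereal b < R \<Longrightarrow> hh \<rho> x > 0"
  using hpos Icc_sub_halfI unfolding hh_def by auto

lemma cg0: assumes "0 < b" "ereal b < R" shows "continuous_on {0..b} (g0 \<rho> p)"
  unfolding g0_alt[abs_def]
  using assms hposI[of _ b] by (intro continuous_intros cphi ch cp) force+

lemma cI0: assumes "0 < b" "ereal b < R" shows "continuous_on {0..b} (I0 \<rho> p)"
  unfolding I0_def[abs_def]
  by (intro indefinite_integral_continuous_1 integrable_continuous_interval cg0 assms)

lemma dI0: assumes "x \<in> openI R" shows "(I0 \<rho> p has_real_derivative g0 \<rho> p x) (at x)"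
proof -
  obtain c where c: "x < c" "ereal c < R" using assms ex_above unfolding openI_def by blast
  have x0: "0 < x" using assms unfolding openI_def by auto
  show ?thesis unfolding I0_def[abs_def] by (rule ftc_at[OF cg0 x0 c(1)]) (use c x0 in auto)
qed

lemma cDint: assumes "0 < b" "ereal b < R" shows "continuous_on {0..b} (Dint \<rho> p)"
  unfolding Dint_alt[abs_def]
  using assms hposI[of _ b] by (intro continuous_intros cI0 ch) force+

lemma cDfun: assumes "0 < b" "ereal b < R" shows "continuous_on {0..b} (Dfun \<rho> p dpc)"
proof -
  have "continuous_on {0..b} (\<lambda>r. integral {0..r} (Dint \<rho> p))"
    by (intro indefinite_integral_continuous_1 integrable_continuous_interval cDint assms)
  then show ?thesis unfolding Dfun_alt[abs_def] by (intro continuous_intros)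
qed

lemma dDfun: assumes "x \<in> openI R"
  shows "(Dfun \<rho> p dpc has_real_derivative 4 * pi * dpc * Dint \<rho> p x) (at x)"
proof -
  obtain c where c: "x < c" "ereal c < R" using assms ex_above unfolding openI_def by blast
  have x0: "0 < x" using assms unfolding openI_def by auto
  have "((\<lambda>u. integral {0..u} (Dint \<rho> p)) has_real_derivative Dint \<rho> p x) (at x)"
    by (rule ftc_at[OF cDint x0 c(1)]) (use c x0 in auto)
  then show ?thesis unfolding Dfun_alt[abs_def] by (intro derivative_eq_intros) auto
qed

lemma dh: assumes "x \<in> openI R"
  shows "(hh \<rho> has_real_derivative -2*(4*pi*\<rho> x*x^3 - mass \<rho> x)/x^2) (at x)"
proof -
  have x0: "0 < x" using assms unfolding openI_def by auto
  have "((\<lambda>r. mass \<rho> r / r) has_real_derivative (4 * pi * (\<rho> x * x\<^sup>2) * x - mass \<rho> x * 1)/(x*x)) (at x)"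
    by (rule DERIV_divide[OF dmass[OF assms] DERIV_ident]) (use x0 in simp)
  from DERIV_diff[OF DERIV_const DERIV_cmult[OF this, of 2], of 1]
  have "((\<lambda>r. 1 - 2 * (mass \<rho> r / r)) has_real_derivative
       0 - 2 * ((4 * pi * (\<rho> x * x\<^sup>2) * x - mass \<rho> x * 1) / (x * x))) (at x)" .
  moreover have "hh \<rho> = (\<lambda>r. 1 - 2 * (mass \<rho> r / r))" by (auto simp: hh_def)
  ultimately show ?thesis
    by (auto elim!: DERIV_cong) (use x0 in \<open>simp add: field_simps power2_eq_square power3_eq_cube\<close>)
qed

lemma dS: assumes "x \<in> openI R"
  shows "((\<lambda>r. sqrt (hh \<rho> r)) has_real_derivative
           (-2*(4*pi*\<rho> x*x^3 - mass \<rho> x)/x^2) / (2 * sqrt (hh \<rho> x))) (at x)"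
proof -
  have h: "hh \<rho> x > 0" using hpos_open[OF assms] unfolding hh_def .
  show ?thesis
    by (rule DERIV_cong[OF DERIV_chain2[OF DERIV_real_sqrt[OF h] dh[OF assms]]])
       (simp add: divide_simps mult_ac)
qed

lemma dE: assumes "x \<in> openI R"
  shows "((\<lambda>r. exp (- 2 * I0 \<rho> p r)) has_real_derivative
           -2 * g0 \<rho> p x * exp (- 2 * I0 \<rho> p x)) (at x)"
  by (rule derivative_eq_intros dI0[OF assms] refl | simp)+

end

lemma alg_fwd:
  fixes x S h E D dpc \<rho> m P :: real
  assumes "x > 0" "S > 0" "h = S^2" "D \<noteq> 0"
  shows "- ((\<rho> + P) * (m + 4*pi*P*x^3)) / (x^2*h)
     + ((dpc * ((-2*(4*pi*\<rho>*x^3 - m)/x^2)/(2*S)) * E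
         + (-2 * ((m + 4*pi*P*x^3)/(x^2*h)) * E) * (dpc * S)) * D
        - (dpc * S * E) * (4*pi*dpc*(x*E/S))) / (D * D)
   = - ((\<rho> + (P + dpc*S*E/D)) * (m + 4*pi*(P + dpc*S*E/D)*x^3)) / (x^2*h)"
  using assms by (simp add: field_simps power2_eq_square) (simp add: algebra_simps power3_eq_cube)

context tov begin

lemma fwd_deriv:
  assumes x: "x \<in> openI R" and D: "Dfun \<rho> p dpc x \<noteq> 0"
  shows "((\<lambda>r. p r + delta_p \<rho> p dpc r) has_real_derivative
           TOV_rhs \<rho> (\<lambda>r. p r + delta_p \<rho> p dpc r) x) (at x)"
proof -
  let ?S = "sqrt (hh \<rho> x)" and ?E = "exp (- 2 * I0 \<rho> p x)" and ?D = "Dfun \<rho> p dpc x"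
  let ?h' = "-2*(4*pi*\<rho> x*x^3 - mass \<rho> x)/x^2"
  have eq: "delta_p \<rho> p dpc = (\<lambda>r. dpc * sqrt (hh \<rho> r) * exp (- 2 * I0 \<rho> p r) / Dfun \<rho> p dpc r)"
    by (auto simp: delta_p_def hh_def)
  have d: "((\<lambda>r. p r + delta_p \<rho> p dpc r) has_real_derivative
     TOV_rhs \<rho> p x + ((dpc * (?h' / (2 * ?S)) * ?E + (-2 * g0 \<rho> p x * ?E) * (dpc * ?S)) * ?D
      - (dpc * ?S * ?E) * (4 * pi * dpc * Dint \<rho> p x)) / (?D * ?D)) (at x)"
    unfolding eq
    by (intro DERIV_add pder[OF x] DERIV_divide DERIV_mult DERIV_cmult dS[OF x] dE[OF x] dDfun[OF x] D)
  have x0: "x > 0" using x unfolding openI_def by auto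
  have hp: "hh \<rho> x > 0" using hpos_open[OF x] unfolding hh_def .
  have Sp: "?S > 0" using hp by simp
  have hS: "hh \<rho> x = ?S^2" using hp by simp
  show ?thesis
  proof (rule DERIV_cong[OF d])
    have "TOV_rhs \<rho> p x = - ((\<rho> x + p x) * (mass \<rho> x + 4 * pi * p x * x ^ 3)) / (x\<^sup>2 * hh \<rho> x)"
      unfolding TOV_rhs_def hh_def ..
    moreover have "TOV_rhs \<rho> (\<lambda>r. p r + delta_p \<rho> p dpc r) x =
      - ((\<rho> x + (p x + dpc * ?S * ?E / ?D)) * (mass \<rho> x + 4 * pi * (p x + dpc * ?S * ?E / ?D) * x ^ 3)) / (x\<^sup>2 * hh \<rho> x)"
      unfolding TOV_rhs_def hh_def delta_p_def ..
    moreover have "g0 \<rho> p x = (mass \<rho> x + 4 * pi * p x * x ^ 3) / (x\<^sup>2 * hh \<rho> x)"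
      unfolding g0_def hh_def ..
    moreover have "Dint \<rho> p x = x * ?E / ?S" unfolding Dint_alt ..
    ultimately show "TOV_rhs \<rho> p x + ((dpc * (?h' / (2 * ?S)) * ?E + (-2 * g0 \<rho> p x * ?E) * (dpc * ?S)) * ?D
      - (dpc * ?S * ?E) * (4 * pi * dpc * Dint \<rho> p x)) / (?D * ?D) =
      TOV_rhs \<rho> (\<lambda>r. p r + delta_p \<rho> p dpc r) x"
      using alg_fwd[OF x0 Sp hS D, where \<rho>="\<rho> x" and m="mass \<rho> x" and P="p x" and dpc=dpc and E="?E"] by simp
  qed
qed
end
context tov begin

lemma delta_p0: "delta_p \<rho> p dpc 0 = dpc"
  unfolding delta_p_def by (simp add: mass0 I00 Dfun0)

lemma forward:
  assumes R': "0 < R'" "R' \<le> R" and Dpos: "\<forall>r\<in>halfI R'. Dfun \<rho> p dpc r > 0"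
  shows "solves_TOV \<rho> (\<lambda>r. p r + delta_p \<rho> p dpc r) R' \<and>
         regular_centre \<rho> (\<lambda>r. p r + delta_p \<rho> p dpc r) \<and>
         p 0 + delta_p \<rho> p dpc 0 = p 0 + dpc"
proof -
  have sub: "openI R' \<subseteq> openI R" using R' unfolding openI_def by (auto intro: order.strict_trans2)
  have subh: "openI R' \<subseteq> halfI R'" unfolding openI_def halfI_def by auto
  have co: "continuous_on (openI R) \<rho>" using sol unfolding solves_TOV_def by auto
  have der: "\<And>x. x \<in> openI R' \<Longrightarrow> ((\<lambda>r. p r + delta_p \<rho> p dpc r) has_real_derivative
           TOV_rhs \<rho> (\<lambda>r. p r + delta_p \<rho> p dpc r) x) (at x)"
    using fwd_deriv sub subh Dpos by (metis less_irrefl subsetD)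
  have cont: "continuous_on (openI R') (TOV_rhs \<rho> (\<lambda>r. p r + delta_p \<rho> p dpc r))"
  proof (intro continuous_at_imp_continuous_on ballI)
    fix x assume x: "x \<in> openI R'"
    have xR: "x \<in> openI R" using x sub by auto
    have x0: "x > 0" using x unfolding openI_def by auto
    have h: "1 - 2 * mass \<rho> x / x > 0" using hpos_open[OF xR] .
    have c1: "isCont \<rho> x" using isCont_openI[OF co xR] .
    have c2: "isCont (\<lambda>r. p r + delta_p \<rho> p dpc r) x" using der[OF x] DERIV_isCont by blast
    have c3: "isCont (mass \<rho>) x" using dmass[OF xR] DERIV_isCont by blast
    have c4: "isCont p x" using pder[OF xR] DERIV_isCont by blast
    have "isCont (\<lambda>r. (p r + delta_p \<rho> p dpc r) - p r) x" using continuous_diff[OF c2 c4] .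
    then have c5: "isCont (delta_p \<rho> p dpc) x" by simp
    show "isCont (TOV_rhs \<rho> (\<lambda>r. p r + delta_p \<rho> p dpc r)) x"
      unfolding TOV_rhs_def[abs_def]
      using c1 c3 c4 c5 x0 h by (intro continuous_intros) auto
  qed
  have sol': "solves_TOV \<rho> (\<lambda>r. p r + delta_p \<rho> p dpc r) R'"
    unfolding solves_TOV_def C1_on_def
    using continuous_on_subset[OF co sub] cont der hpos_open sub by blast
  obtain b where b: "0 < b" "ereal b < R'" using ereal_dense2[OF R'(1)] by (auto simp: zero_ereal_def)
  have bR: "ereal b < R" using b R' by (auto intro: order.strict_trans2)
  have eq: "delta_p \<rho> p dpc = (\<lambda>r. dpc * sqrt (hh \<rho> r) * exp (- 2 * I0 \<rho> p r) / Dfun \<rho> p dpc r)"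
    by (auto simp: delta_p_def hh_def)
  have Dp: "\<And>r. r \<in> {0..b} \<Longrightarrow> Dfun \<rho> p dpc r \<noteq> 0"
    using Dpos Icc_sub_halfI[OF b(2)] by (metis less_irrefl)
  have "continuous_on {0..b} (delta_p \<rho> p dpc)"
    unfolding eq using Dp hposI[of _ b] bR
    by (intro continuous_intros ch cI0 cDfun b(1) bR) force+
  then have l1: "(delta_p \<rho> p dpc \<longlongrightarrow> delta_p \<rho> p dpc 0) (at_right 0)"
    using continuous_on_Icc_at_rightD b(1) by blast
  have "((\<lambda>r. p r + delta_p \<rho> p dpc r) \<longlongrightarrow> p 0 + delta_p \<rho> p dpc 0) (at_right 0)"
    using reg l1 unfolding regular_centre_def by (intro tendsto_add) auto
  then have "regular_centre \<rho> (\<lambda>r. p r + delta_p \<rho> p dpc r)"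
    using reg unfolding regular_centre_def by simp
  with sol' show ?thesis by (simp add: delta_p0)
qed

end

lemma alg_bwd:
  fixes x S h E D dpc \<rho> m P Q S' E' :: real
  assumes "x > 0" "S > 0" "h = S^2" "E > 0"
    "S' = (-2*(4*pi*\<rho>*x^3 - m)/x^2)/(2*S)" "E' = -2 * ((m + 4*pi*P*x^3)/(x^2*h)) * E"
  shows "(((- ((\<rho> + Q) * (m + 4*pi*Q*x^3)) / (x^2*h)) - (- ((\<rho> + P) * (m + 4*pi*P*x^3)) / (x^2*h))) * (S*E)
           - (Q - P) * (S' * E + E' * S)) / ((S*E) * (S*E)) * D
         + (4*pi*dpc*(x*E/S)) * ((Q - P)/(S*E)) - 0
   = - ((4*pi*(x*E/S)) * ((Q - P)/(S*E))) * ((Q - P)/(S*E) * D - dpc)"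
  using assms(1-4) unfolding assms(5,6) by (simp add: field_simps power2_eq_square) (simp add: algebra_simps power3_eq_cube)

lemma lin_unique:
  fixes \<Psi> a :: "real \<Rightarrow> real"
  assumes b: "0 < b" and c\<Psi>: "continuous_on {0..b} \<Psi>" and ca: "continuous_on {0..b} a"
    and z: "\<Psi> 0 = 0"
    and d: "\<And>x. 0 < x \<Longrightarrow> x < b \<Longrightarrow> (\<Psi> has_real_derivative - (a x) * \<Psi> x) (at x)"
  shows "\<forall>y\<in>{0..b}. \<Psi> y = 0"
proof
  fix y assume y: "y \<in> {0..b}"
  define A where "A u = integral {0..u} a" for u
  define G where "G u = \<Psi> u * exp (A u)" for u
  have cA: "continuous_on {0..b} A" unfolding A_def[abs_def]
    by (intro indefinite_integral_continuous_1 integrable_continuous_interval ca)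
  have cG: "continuous_on {0..b} G" unfolding G_def[abs_def]
    by (intro continuous_intros cA c\<Psi>)
  have dG: "(G has_real_derivative 0) (at x)" if "0 < x" "x < b" for x
  proof -
    have dA: "(A has_real_derivative a x) (at x)" unfolding A_def[abs_def]
      by (rule ftc_at[OF ca that])
    show ?thesis unfolding G_def[abs_def]
      by (rule DERIV_cong[OF DERIV_mult[OF d[OF that] DERIV_chain2[OF DERIV_exp dA]]])
         (simp add: algebra_simps)
  qed
  show "\<Psi> y = 0"
  proof (cases "y = 0")
    case True then show ?thesis using z by simp
  next
    case False
    then have y0: "0 < y" using y by auto
    have "G y = G 0"
      by (rule DERIV_isconst_end[OF y0]) (use continuous_on_subset[OF cG] y dG in auto)
    then have "\<Psi> y * exp (A y) = 0" using z unfolding G_def by simp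
    then show ?thesis by simp
  qed
qed

context tov begin

lemma converse:
  assumes qs: "solves_TOV \<rho> q R" and qr: "regular_centre \<rho> q" and r: "r \<in> halfI R"
  shows "Dfun \<rho> p (q 0 - p 0) r > 0 \<and> q r = p r + delta_p \<rho> p (q 0 - p 0) r"
proof -
  interpret Q: tov \<rho> q R using qs qr Rpos by unfold_locales
  define dpc where "dpc = q 0 - p 0"
  obtain b where b: "r < b" "ereal b < R" using r ex_above unfolding halfI_def by blast
  have b0: "0 < b" using r b unfolding halfI_def by auto
  define F where "F u = sqrt (hh \<rho> u) * exp (- 2 * I0 \<rho> p u)" for u
  define v where "v u = (q u - p u) / F u" for u
  define \<Psi> where "\<Psi> u = v u * Dfun \<rho> p dpc u - dpc" for u
  define a where "a u = 4 * pi * Dint \<rho> p u * v u" for u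
  have Fpos: "F u > 0" if "u \<in> {0..b}" for u
    using hposI[of u b] that b unfolding F_def by auto
  have cF: "continuous_on {0..b} F" unfolding F_def[abs_def]
    using hposI[of _ b] b b0 by (intro continuous_intros ch cI0) force+
  have cv: "continuous_on {0..b} v" unfolding v_def[abs_def]
    using Fpos b b0 by (intro continuous_intros cF cp Q.cp) force+
  have c\<Psi>: "continuous_on {0..b} \<Psi>" unfolding \<Psi>_def[abs_def]
    using b b0 by (intro continuous_intros cv cDfun)
  have ca: "continuous_on {0..b} a" unfolding a_def[abs_def]
    using b b0 by (intro continuous_intros cv cDint)
  have h0: "hh \<rho> 0 = 1" unfolding hh_def by simp
  have z: "\<Psi> 0 = 0" unfolding \<Psi>_def v_def F_def dpc_def by (simp add: h0 I00 Dfun0)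
  have d: "(\<Psi> has_real_derivative - (a x) * \<Psi> x) (at x)" if x: "0 < x" "x < b" for x
  proof -
    have xR: "x \<in> openI R" using Ioc_sub_openI[OF b(2)] x by auto
    let ?S = "sqrt (hh \<rho> x)" and ?E = "exp (- 2 * I0 \<rho> p x)" and ?D = "Dfun \<rho> p dpc x"
    let ?S' = "(-2*(4*pi*\<rho> x*x^3 - mass \<rho> x)/x^2) / (2 * ?S)"
    let ?E' = "-2 * g0 \<rho> p x * ?E"
    have hp: "hh \<rho> x > 0" using hpos_open[OF xR] unfolding hh_def .
    have Sp: "?S > 0" using hp by simp
    have hS: "hh \<rho> x = ?S^2" using hp by simp
    have Ep: "?E > 0" by simp
    have Fx: "F x \<noteq> 0" using Fpos[of x] x by auto
    have eqf: "\<Psi> = (\<lambda>u. (q u - p u) / (sqrt (hh \<rho> u) * exp (- 2 * I0 \<rho> p u)) * Dfun \<rho> p dpc u - dpc)"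
      by (auto simp: \<Psi>_def v_def F_def)
    have dd: "(\<Psi> has_real_derivative
       ((TOV_rhs \<rho> q x - TOV_rhs \<rho> p x) * (?S * ?E) - (q x - p x) * (?S' * ?E + ?E' * ?S)) / ((?S * ?E) * (?S * ?E)) * ?D
        + (4 * pi * dpc * Dint \<rho> p x) * ((q x - p x) / (?S * ?E)) - 0) (at x)"
      unfolding eqf
      apply (rule DERIV_diff[OF DERIV_mult[OF DERIV_divide[OF DERIV_diff[OF Q.pder[OF xR] pder[OF xR]]
              DERIV_mult[OF dS[OF xR] dE[OF xR]]] dDfun[OF xR]] DERIV_const])
      using Fx unfolding F_def by simp
    show ?thesis
    proof (rule DERIV_cong[OF dd])
      have t1: "TOV_rhs \<rho> q x = - ((\<rho> x + q x) * (mass \<rho> x + 4 * pi * q x * x ^ 3)) / (x\<^sup>2 * hh \<rho> x)"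
        unfolding TOV_rhs_def hh_def ..
      have t2: "TOV_rhs \<rho> p x = - ((\<rho> x + p x) * (mass \<rho> x + 4 * pi * p x * x ^ 3)) / (x\<^sup>2 * hh \<rho> x)"
        unfolding TOV_rhs_def hh_def ..
      have t3: "g0 \<rho> p x = (mass \<rho> x + 4 * pi * p x * x ^ 3) / (x\<^sup>2 * hh \<rho> x)"
        unfolding g0_def hh_def ..
      have t4: "Dint \<rho> p x = x * ?E / ?S" unfolding Dint_alt ..
      have t5: "- (a x) * \<Psi> x = - ((4*pi*(x*?E/?S)) * ((q x - p x)/(?S*?E))) * ((q x - p x)/(?S*?E) * ?D - dpc)"
        unfolding a_def \<Psi>_def v_def F_def t4 by simp
      show "((TOV_rhs \<rho> q x - TOV_rhs \<rho> p x) * (?S * ?E) - (q x - p x) * (?S' * ?E + ?E' * ?S)) / ((?S * ?E) * (?S * ?E)) * ?D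
        + (4 * pi * dpc * Dint \<rho> p x) * ((q x - p x) / (?S * ?E)) - 0 = - (a x) * \<Psi> x"
        unfolding t1 t2 t4 t5
        by (rule alg_bwd[OF x(1) Sp hS Ep, where \<rho>="\<rho> x" and m="mass \<rho> x" and P="p x"]) (simp_all add: t3)
    qed
  qed
  have all0: "\<forall>y\<in>{0..b}. \<Psi> y = 0" by (rule lin_unique[OF b0 c\<Psi> ca z d])
  have Dpos: "Dfun \<rho> p dpc r > 0"
  proof (rule ccontr)
    assume "\<not> Dfun \<rho> p dpc r > 0"
    then have le: "Dfun \<rho> p dpc r \<le> 0" by simp
    have r0: "0 \<le> r" using r unfolding halfI_def by auto
    have "continuous_on {0..r} (Dfun \<rho> p dpc)"
      using continuous_on_subset[OF cDfun[OF b0 b(2)]] b by auto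
    then obtain y where y: "0 \<le> y" "y \<le> r" "Dfun \<rho> p dpc y = 0"
      using IVT2'[of "Dfun \<rho> p dpc" r 0 0] le r0 by (auto simp: Dfun0)
    then have "\<Psi> y = 0" using all0 b by auto
    then have "dpc = 0" using y unfolding \<Psi>_def by simp
    then have "Dfun \<rho> p dpc r = 1" by (simp add: Dfun_alt)
    then show False using le by simp
  qed
  have "\<Psi> r = 0" using all0 b r unfolding halfI_def by auto
  then have "v r * Dfun \<rho> p dpc r = dpc" unfolding \<Psi>_def by simp
  then have "v r = dpc / Dfun \<rho> p dpc r" using Dpos by (simp add: field_simps)
  moreover have "F r > 0" using Fpos r b unfolding halfI_def by auto
  ultimately have "q r = p r + dpc * F r / Dfun \<rho> p dpc r" unfolding v_def by (simp add: field_simps)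
  then have "q r = p r + delta_p \<rho> p dpc r" unfolding F_def delta_p_def hh_def by (simp add: mult.assoc)
  with Dpos show ?thesis unfolding dpc_def by simp
qed

end
theorem theoremP1:
  fixes \<rho>0 p0 :: "real \<Rightarrow> real" and R :: ereal
  assumes "0 < R"
    and "solves_TOV \<rho>0 p0 R" and "regular_centre \<rho>0 p0"
  shows "(\<forall>dpc R'. 0 < R' \<and> R' \<le> R \<and> (\<forall>r\<in>halfI R'. Dfun \<rho>0 p0 dpc r > 0) \<longrightarrow>
            solves_TOV \<rho>0 (\<lambda>r. p0 r + delta_p \<rho>0 p0 dpc r) R' \<and>
            regular_centre \<rho>0 (\<lambda>r. p0 r + delta_p \<rho>0 p0 dpc r) \<and>
            p0 0 + delta_p \<rho>0 p0 dpc 0 = p0 0 + dpc)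
       \<and> (\<forall>p. solves_TOV \<rho>0 p R \<and> regular_centre \<rho>0 p \<longrightarrow>
            (\<forall>r\<in>halfI R. Dfun \<rho>0 p0 (p 0 - p0 0) r > 0 \<and>
                         p r = p0 r + delta_p \<rho>0 p0 (p 0 - p0 0) r))"
proof -
  interpret T: tov \<rho>0 p0 R using assms by unfold_locales
  show ?thesis using T.forward T.converse by blast
qed

end
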